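(* Let $D$ be a domain in $\mathbb{C}^n$, let $\mathcal{F}$ be a family of holomorphic functions on $D$, and let $\alpha>0$ be a real number. If the family of functions $$F_\alpha=\left\{z\mapsto \sup_{\|v\|=1}\frac{|(Df(z),v)|}{1+|f(z)|^{\alpha}}\ :\ f\in\mathcal{F}\right\}$$ is locally uniformly bounded in $D$, then $\mathcal{F}$ is normal in $D$.
   Context: For $v=(v_1,\dots,v_n)\in\mathbb{C}^n$, $(Df(z),v)=\sum_{j=1}^n \frac{\partial f}{\partial z_j}(z)\,v_j$; the supremum is over $v$ with Euclidean norm $1$. A family is normal in $D$ if every sequence in it has a subsequence converging locally uniformly in $D$. *)

theory Defs
  imports "HOL-Analysis.Analysis"
begin

definition clinear_map :: "(complex ^ 'n \<Rightarrow> complex) \<Rightarrow> bool" where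
  "clinear_map L \<longleftrightarrow> linear L \<and> (\<forall>c v. L (c *s v) = c * L v)"

definition holo_on :: "(complex ^ 'n \<Rightarrow> complex) \<Rightarrow> (complex ^ 'n) set \<Rightarrow> bool" where
  "holo_on f D \<longleftrightarrow> (\<forall>z\<in>D. \<exists>L. clinear_map L \<and> (f has_derivative L) (at z))"

definition cpartial :: "(complex ^ 'n \<Rightarrow> complex) \<Rightarrow> 'n \<Rightarrow> complex ^ 'n \<Rightarrow> complex" where
  "cpartial f j z = deriv (\<lambda>w. f (\<chi> k. if k = j then z $ k + w else z $ k)) 0"

definition Dpair :: "(complex ^ 'n \<Rightarrow> complex) \<Rightarrow> complex ^ 'n \<Rightarrow> complex ^ 'n \<Rightarrow> complex" where
  "Dpair f z v = (\<Sum>j\<in>UNIV. cpartial f j z * v $ j)"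

definition F_alpha :: "real \<Rightarrow> (complex ^ 'n \<Rightarrow> complex) \<Rightarrow> complex ^ 'n \<Rightarrow> real" where
  "F_alpha \<alpha> f z = (SUP v\<in>{v. norm v = 1}. cmod (Dpair f z v) / (1 + cmod (f z) powr \<alpha>))"

definition loc_unif_bounded :: "('a \<Rightarrow> real) set \<Rightarrow> ('a::topological_space) set \<Rightarrow> bool" where
  "loc_unif_bounded G D \<longleftrightarrow>
     (\<forall>z\<in>D. \<exists>U M. open U \<and> z \<in> U \<and> U \<subseteq> D \<and> (\<forall>g\<in>G. \<forall>w\<in>U. \<bar>g w\<bar> \<le> M))"

definition normal_family :: "(complex ^ 'n \<Rightarrow> complex) set \<Rightarrow> (complex ^ 'n) set \<Rightarrow> bool" where
  "normal_family F D \<longleftrightarrow>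
     (\<forall>s::nat \<Rightarrow> complex ^ 'n \<Rightarrow> complex. range s \<subseteq> F \<longrightarrow>
        (\<exists>r. strict_mono r \<and>
          ((\<exists>g. \<forall>z\<in>D. \<exists>U. open U \<and> z \<in> U \<and> U \<subseteq> D \<and>
                   uniform_limit U (\<lambda>k. s (r k)) g sequentially)
           \<or> (\<forall>z\<in>D. \<exists>U. open U \<and> z \<in> U \<and> U \<subseteq> D \<and>
                   (\<forall>B. \<forall>\<^sub>F k in sequentially. \<forall>w\<in>U. cmod (s (r k) w) \<ge> B)))))"

end

theory Submission
  imports Defs "HOL-Complex_Analysis.Great_Picard"
begin

lemma AA_local:
  fixes \<F> :: "nat \<Rightarrow> 'a::euclidean_space \<Rightarrow> 'b::{real_normed_vector,heine_borel}"
  assumes "open S"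
    and bounded: "\<And>K. \<lbrakk>compact K; K \<subseteq> S\<rbrakk> \<Longrightarrow> \<exists>B. \<forall>n. \<forall>z\<in>K. norm (\<F> n z) \<le> B"
    and equi: "\<And>x e. \<lbrakk>x \<in> S; 0 < e\<rbrakk> \<Longrightarrow> \<exists>d>0. \<forall>n y. y \<in> S \<and> norm (x - y) < d \<longrightarrow> norm (\<F> n x - \<F> n y) < e"
  obtains g r where "strict_mono (r :: nat \<Rightarrow> nat)"
    "\<And>K. \<lbrakk>compact K; K \<subseteq> S\<rbrakk> \<Longrightarrow> uniform_limit K (\<F> \<circ> r) g sequentially"
proof -
  obtain K where comK: "\<And>n. compact(K n)" and KS: "\<And>n::nat. K n \<subseteq> S"
             and subK: "\<And>X. \<lbrakk>compact X; X \<subseteq> S\<rbrakk> \<Longrightarrow> \<exists>N. \<forall>n\<ge>N. X \<subseteq> K n"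
    using open_Union_compact_subsets [OF \<open>open S\<close>] by metis
  then have "\<And>i. \<exists>B. \<forall>n. \<forall> z \<in> K i. norm(\<F> n z) \<le> B"
    by (simp add: bounded)
  then obtain B where B: "\<And>i n z. z \<in> K i \<Longrightarrow> norm(\<F> n z) \<le> B i"
    by metis
  have *: "\<exists>r g. strict_mono (r::nat\<Rightarrow>nat) \<and> (\<forall>e > 0. \<exists>N. \<forall>n\<ge>N. \<forall>x \<in> K i. norm((\<F> \<circ> (q \<circ> r)) n x - g x) < e)"
    for i and q :: "nat \<Rightarrow> nat"
  proof -
    obtain g k where "continuous_on (K i) g" "strict_mono (k::nat\<Rightarrow>nat)"
                    "\<And>e. 0 < e \<Longrightarrow> \<exists>N. \<forall>n x. n \<ge> N \<and> x \<in> K i \<longrightarrow> norm((\<F> \<circ> q) (k n) x - g x) < e"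
    proof (rule Arzela_Ascoli [of "K i" "\<F> \<circ> q" "B i"])
      show "compact (K i)" by (rule comK)
      show "\<And>n x. x \<in> K i \<Longrightarrow> norm ((\<F> \<circ> q) n x) \<le> B i" using B by simp
      show "\<exists>d>0. \<forall>n y. y \<in> K i \<and> norm (x - y) < d \<longrightarrow> norm ((\<F> \<circ> q) n x - (\<F> \<circ> q) n y) < e"
        if "x \<in> K i" "0 < e" for x e
        using equi[of x e] that KS by (auto simp: subset_iff)
    qed (blast)
    then show ?thesis
      by (simp add: o_def) meson
  qed
  define \<Phi> where "\<Phi> \<equiv> \<lambda>g i r. \<lambda>k::nat\<Rightarrow>nat. \<forall>e>0. \<exists>N. \<forall>n\<ge>N. \<forall>x\<in>K i. norm ((\<F> \<circ> (r \<circ> k)) n x - g x) < e"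
  obtain k :: "nat \<Rightarrow> nat" where "strict_mono k" and k: "\<And>i. \<exists>g. \<Phi> g i id k"
  proof (rule subsequence_diagonalization_lemma [where r=id])
    show "\<exists>g. \<Phi> g i id (r \<circ> k2)" 
      if ex: "\<exists>g. \<Phi> g i id (r \<circ> k1)" and "\<And>j. N \<le> j \<Longrightarrow> \<exists>j'\<ge>j. k2 j = k1 j'" 
      for i k1 k2 N and r::"nat\<Rightarrow>nat"
    proof -
      obtain g where "\<Phi> g i id (r \<circ> k1)"
        using ex by blast
      then have "\<Phi> g i id (r \<circ> k2)"
        using that
        by (simp add: \<Phi>_def) (metis (no_types, opaque_lifting) le_trans linear)
      then show ?thesis
        by metis
    qed
    show "\<And>i r. \<exists>k. strict_mono (k::nat\<Rightarrow>nat) \<and> (\<exists>g. \<Phi> g i id (r \<circ> k))"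
      unfolding \<Phi>_def o_assoc using * by (simp add: o_def)
  qed fastforce
  have "\<exists>l. \<forall>e>0. \<exists>N. \<forall>n\<ge>N. norm(\<F> (k n) z - l) < e" if "z \<in> S" for z
  proof -
    obtain G where G: "\<And>i e. e > 0 \<Longrightarrow> \<exists>M. \<forall>n\<ge>M. \<forall>x\<in>K i. norm ((\<F> \<circ> k) n x - G i x) < e"
      using k unfolding \<Phi>_def by (metis id_comp)
    obtain N where "\<And>n. n \<ge> N \<Longrightarrow> z \<in> K n"
      using subK [of "{z}"] that \<open>z \<in> S\<close> by auto
    moreover have "\<And>e. e > 0 \<Longrightarrow> \<exists>M. \<forall>n\<ge>M. \<forall>x\<in>K N. norm ((\<F> \<circ> k) n x - G N x) < e"
      using G by auto
    ultimately show ?thesis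
      by (metis comp_apply order_refl)
  qed
  then obtain g where g: "\<And>z e. \<lbrakk>z \<in> S; e > 0\<rbrakk> \<Longrightarrow> \<exists>N. \<forall>n\<ge>N. norm(\<F> (k n) z - g z) < e"
    by metis
  show ?thesis
  proof
    have g_lim: "\<And>x. x \<in> S \<Longrightarrow> (\<lambda>n. \<F> (k n) x) \<longlonglongrightarrow> g x"
      by (simp add: lim_sequentially g dist_norm)    
    have dg_le_e: "\<exists>N. \<forall>n\<ge>N. \<forall>x\<in>T. norm (\<F> (k n) x - g x) < e"
      if T: "compact T" "T \<subseteq> S" and "0 < e" for T e
    proof -
      obtain N where N: "\<And>n. n \<ge> N \<Longrightarrow> T \<subseteq> K n"
        using subK [OF T] by blast
      obtain h where h: "\<And>e. e>0 \<Longrightarrow> \<exists>M. \<forall>n\<ge>M. \<forall>x\<in>K N. norm ((\<F> \<circ> k) n x - h x) < e"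
        using k unfolding \<Phi>_def by (metis id_comp)
      have geq: "g w = h w" if "w \<in> T" for w
      proof (rule LIMSEQ_unique)
        show "(\<lambda>n. \<F> (k n) w) \<longlonglongrightarrow> g w"
          using \<open>T \<subseteq> S\<close> g_lim that by blast
        show "(\<lambda>n. \<F> (k n) w) \<longlonglongrightarrow> h w"
          using h N that by (force simp: lim_sequentially dist_norm)
      qed
      show ?thesis
        using T h N \<open>0 < e\<close> by (fastforce simp add: geq)
    qed
    then show "\<And>K. \<lbrakk>compact K; K \<subseteq> S\<rbrakk>
         \<Longrightarrow> uniform_limit K (\<F> \<circ> k) g sequentially"
      by (simp add: uniform_limit_iff dist_norm eventually_sequentially)
  qed (auto simp: \<open>strict_mono k\<close>)
qed


lemma norm_smult_vec: "norm (c *s (x :: complex ^ 'n)) = cmod c * norm x"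
proof -
  have "norm (c *s x) = L2_set (\<lambda>i. cmod c * norm (x $ i)) UNIV"
    by (simp add: norm_vec_def norm_mult)
  also have "\<dots> = cmod c * norm x"
    by (simp add: norm_vec_def L2_set_right_distrib)
  finally show ?thesis .
qed

lemma bounded_linear_smult: "bounded_linear (\<lambda>w::complex. w *s (a :: complex ^ 'n))"
proof (rule bounded_linear_intro[where K="norm a"])
  show "\<And>x y. (x + y) *s a = x *s a + y *s a" by (simp add: vector_sadd_rdistrib)
  show "\<And>r x. (r *\<^sub>R x) *s a = r *\<^sub>R (x *s a)"
    by (simp add: vec_eq_iff)
  show "\<And>x. norm (x *s a) \<le> norm x * norm a" by (simp add: norm_smult_vec)
qed

lemma line_deriv:
  fixes f :: "complex ^ 'n \<Rightarrow> complex"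
  assumes "(f has_derivative L) (at (z + w *s a))" "clinear_map L"
  shows "((\<lambda>w. f (z + w *s a)) has_field_derivative L a) (at w)"
proof -
  have d1: "((\<lambda>w. z + w *s a) has_derivative (\<lambda>w. w *s a)) (at w)"
    using bounded_linear_imp_has_derivative[OF bounded_linear_smult]
    by (auto intro!: derivative_eq_intros)
  have "((f \<circ> (\<lambda>w. z + w *s a)) has_derivative (L \<circ> (\<lambda>w. w *s a))) (at w)"
    by (rule diff_chain_at[OF d1]) (use assms(1) in simp)
  moreover have "L \<circ> (\<lambda>w. w *s a) = (*) (L a)"
    using assms(2) by (auto simp: clinear_map_def fun_eq_iff mult.commute)
  ultimately show ?thesis
    by (simp add: has_field_derivative_def o_def)
qed

lemma cpartial_eq:
  fixes f :: "complex ^ 'n \<Rightarrow> complex"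
  assumes "(f has_derivative L) (at z)" "clinear_map L"
  shows "cpartial f j z = L (axis j 1)"
proof -
  have eq: "(\<lambda>w. f (\<chi> k. if k = j then z $ k + w else z $ k)) = (\<lambda>w. f (z + w *s axis j 1))"
    by (auto simp: fun_eq_iff vec_eq_iff axis_def intro!: arg_cong[where f=f])
  have "((\<lambda>w. f (z + w *s axis j 1)) has_field_derivative L (axis j 1)) (at 0)"
    by (rule line_deriv) (use assms in simp_all)
  then show ?thesis
    unfolding cpartial_def eq by (rule DERIV_imp_deriv)
qed

lemma Dpair_eq:
  fixes f :: "complex ^ 'n \<Rightarrow> complex"
  assumes "(f has_derivative L) (at z)" "clinear_map L"
  shows "Dpair f z v = L v"
proof -
  have lin: "linear L" using assms(2) by (simp add: clinear_map_def)
  have "Dpair f z v = (\<Sum>j\<in>UNIV. L (v $ j *s axis j 1))"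
    unfolding Dpair_def using assms
    by (intro sum.cong refl) (auto simp: cpartial_eq clinear_map_def mult.commute)
  also have "\<dots> = L (\<Sum>j\<in>UNIV. v $ j *s axis j 1)"
    by (simp add: real_vector.linear_sum[OF lin])
  also have "\<dots> = L v" by (simp add: basis_expansion)
  finally show ?thesis .
qed

lemma deriv_bound_from_F:
  fixes f :: "complex ^ 'n \<Rightarrow> complex"
  assumes "(f has_derivative L) (at z)" "clinear_map L" "\<bar>F_alpha \<alpha> f z\<bar> \<le> M"
  shows "norm (L v) \<le> M * (1 + norm (f z) powr \<alpha>) * norm v"
proof -
  have lin: "linear L" using assms(2) by (simp add: clinear_map_def)
  then obtain K where K: "\<And>x. norm (L x) \<le> norm x * K" "K > 0"
    using bounded_linear.pos_bounded linear_conv_bounded_linear by blast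
  define d where "d = 1 + norm (f z) powr \<alpha>"
  have d: "d \<ge> 1" by (simp add: d_def)
  have unit: "norm (L u) \<le> M * d" if "norm u = 1" for u
  proof -
    have bdd: "bdd_above ((\<lambda>v. cmod (Dpair f z v) / d) ` {v. norm v = 1})"
    proof (rule bdd_aboveI2)
      fix v :: "complex ^ 'n" assume "v \<in> {v. norm v = 1}"
      then have "cmod (Dpair f z v) \<le> K" using K(1)[of v] by (simp add: Dpair_eq[OF assms(1,2)])
      then show "cmod (Dpair f z v) / d \<le> K"
      proof -
        have "K \<le> K * d" using d K(2) by simp
        with \<open>cmod (Dpair f z v) \<le> K\<close> d show ?thesis by (simp add: divide_le_eq)
      qed
    qed
    have "cmod (Dpair f z u) / d \<le> F_alpha \<alpha> f z"
      unfolding F_alpha_def d_def[symmetric]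
      by (rule cSUP_upper[OF _ bdd]) (use that in simp)
    also have "\<dots> \<le> M" using assms(3) by simp
    finally show ?thesis
      using d by (simp add: Dpair_eq[OF assms(1,2)] divide_le_eq mult.commute)
  qed
  show ?thesis
  proof (cases "v = 0")
    case True
    then show ?thesis using real_vector.linear_0[OF lin] by simp
  next
    case False
    define u where "u = (1 / norm v) *\<^sub>R v"
    have nu: "norm u = 1" using False by (simp add: u_def)
    have "v = norm v *\<^sub>R u" using False by (simp add: u_def)
    then have "L v = norm v *\<^sub>R L u" by (metis linear_cmul[OF lin])
    then have "norm (L v) = norm v * norm (L u)" by simp
    also have "\<dots> \<le> norm v * (M * d)" using unit[OF nu] by (simp add: mult_left_mono)
    finally show ?thesis by (simp add: d_def mult_ac)
  qed
qed


definition dbound :: "real \<Rightarrow> real \<Rightarrow> (complex ^ 'n \<Rightarrow> complex) \<Rightarrow> (complex ^ 'n) set \<Rightarrow> bool" where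
  "dbound \<alpha> M f C \<longleftrightarrow> (\<forall>w\<in>C. \<exists>L. (f has_derivative L) (at w) \<and> clinear_map L \<and>
       (\<forall>v. norm (L v) \<le> M * (1 + norm (f w) powr \<alpha>) * norm v))"

lemma propagate:
  fixes f :: "complex ^ 'n \<Rightarrow> complex"
  assumes C: "convex C" and db: "dbound \<alpha> M f C" and M: "M > 0" and al: "\<alpha> \<ge> 0"
    and zw: "z \<in> C" "w \<in> C" and fz: "norm (f z) \<le> A" and A: "A \<ge> 0"
    and small: "norm (w - z) * (M * (1 + (A+1) powr \<alpha>)) < 1"
  shows "norm (f w) < A + 1"
proof (rule ccontr)
  assume "\<not> norm (f w) < A + 1"
  then have fw: "A + 1 \<le> norm (f w)" by simp
  define g where "g t = f (z + t *\<^sub>R (w - z))" for t :: real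
  have inC: "z + t *\<^sub>R (w - z) \<in> C" if "t \<in> {0..1}" for t
  proof -
    have "z + t *\<^sub>R (w - z) = (1 - t) *\<^sub>R z + t *\<^sub>R w" by (simp add: algebra_simps)
    then show ?thesis using convexD[OF C zw, of "1-t" t] that by simp
  qed
  have dg: "(g has_derivative (\<lambda>h. L (h *\<^sub>R (w - z)))) (at t)"
    if "(f has_derivative L) (at (z + t *\<^sub>R (w - z)))" for t L
  proof -
    have "((\<lambda>t. z + t *\<^sub>R (w - z)) has_derivative (\<lambda>h. h *\<^sub>R (w - z))) (at t)"
      by (auto intro!: derivative_eq_intros)
    from diff_chain_at[OF this that] show ?thesis by (simp add: g_def[abs_def] o_def)
  qed
  have cont: "continuous_on {0..1} g"
  proof (rule continuous_at_imp_continuous_on, intro ballI)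
    fix t :: real assume "t \<in> {0..1}"
    then obtain L where "(f has_derivative L) (at (z + t *\<^sub>R (w - z)))"
      using db inC unfolding dbound_def by blast
    from dg[OF this] show "isCont g t" by (rule has_derivative_continuous)
  qed
  define T where "T = {0..1} \<inter> (\<lambda>t. norm (g t)) -` {A+1..}"
  have clT: "closed T" unfolding T_def
    by (rule continuous_closed_preimage) (auto intro!: continuous_intros cont)
  have "1 \<in> T" using fw by (simp add: T_def g_def)
  have "bdd_below T" by (rule bdd_belowI[where m=0]) (auto simp: T_def)
  then have TI: "Inf T \<in> T" using clT \<open>1 \<in> T\<close>
    by (intro closed_contains_Inf) auto
  define t1 where "t1 = Inf T"
  have t1: "0 \<le> t1" "t1 \<le> 1" "A + 1 \<le> norm (g t1)" using TI by (auto simp: T_def t1_def)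
  have "t1 \<noteq> 0" using t1(3) fz by (auto simp: g_def)
  then have t1pos: "0 < t1" using t1 by simp
  have below: "norm (g t) < A + 1" if "0 \<le> t" "t < t1" for t
  proof (rule ccontr)
    assume "\<not> norm (g t) < A + 1"
    then have "t \<in> T" using that t1 by (auto simp: T_def)
    then have "t1 \<le> t" unfolding t1_def by (intro cInf_lower) (auto simp: T_def bdd_below_def)
    then show False using that by simp
  qed
  have "\<forall>t\<in>{0..1}. \<exists>L. (f has_derivative L) (at (z + t *\<^sub>R (w - z))) \<and> clinear_map L \<and>
       (\<forall>v. norm (L v) \<le> M * (1 + norm (g t) powr \<alpha>) * norm v)"
    using db inC unfolding dbound_def g_def by blast
  then obtain Ls where Ls0: "\<forall>t\<in>{0..1}. (f has_derivative Ls t) (at (z + t *\<^sub>R (w - z))) \<and> clinear_map (Ls t) \<and>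
       (\<forall>v. norm (Ls t v) \<le> M * (1 + norm (g t) powr \<alpha>) * norm v)"
    by (auto dest!: bchoice)
  note Ls = Ls0[rule_format]
  obtain x where x: "x \<in> {0<..<t1}" and mv: "norm (g t1 - g 0) \<le> norm (Ls x ((t1 - 0) *\<^sub>R (w - z)))"
  proof -
    have "\<exists>x\<in>{0<..<t1}. norm (g t1 - g 0) \<le> norm ((\<lambda>h. Ls x (h *\<^sub>R (w - z))) (t1 - 0))"
    proof (rule mvt_general[OF t1pos])
      show "continuous_on {0..t1} g" using t1 by (intro continuous_on_subset[OF cont]) auto
      show "(g has_derivative (\<lambda>h. Ls x (h *\<^sub>R (w - z)))) (at x)" if "0 < x" "x < t1" for x
        using that t1 Ls[of x] by (intro dg) auto
    qed
    then show ?thesis using that by auto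
  qed
  have xb: "x \<in> {0..1}" using x t1 by auto
  have lin: "linear (Ls x)" using Ls[OF xb] by (simp add: clinear_map_def)
  have gx: "norm (g x) < A + 1" using below x by auto
  have pw: "norm (g x) powr \<alpha> \<le> (A + 1) powr \<alpha>"
    using gx al by (intro powr_mono2) auto
  have "norm (Ls x ((t1 - 0) *\<^sub>R (w - z))) = t1 * norm (Ls x (w - z))"
    using linear_cmul[OF lin] t1 by simp
  also have "\<dots> \<le> t1 * (M * (1 + norm (g x) powr \<alpha>) * norm (w - z))"
    using Ls[OF xb] t1 by (intro mult_left_mono) auto
  also have "\<dots> \<le> 1 * (M * (1 + (A + 1) powr \<alpha>) * norm (w - z))"
    using t1 M pw by (intro mult_mono mult_right_mono) auto
  also have "\<dots> < 1" using small by (simp add: mult_ac)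
  finally have "norm (g t1 - g 0) < 1" using mv by simp
  moreover have "norm (g t1) \<le> norm (g 0) + norm (g t1 - g 0)"
    by (metis add.commute diff_add_cancel norm_triangle_ineq)
  moreover have "norm (g 0) \<le> A" using fz by (simp add: g_def)
  ultimately show False using t1(3) by simp
qed


lemma subseq_choice:
  assumes "\<And>n N. \<exists>k\<ge>N. P n k"
  obtains r :: "nat \<Rightarrow> nat" where "strict_mono r" "\<And>n. P n (r n)"
proof -
  define r where "r = rec_nat (SOME k. P 0 k) (\<lambda>n m. SOME k. k \<ge> Suc m \<and> P (Suc n) k)"
  have r0: "r 0 = (SOME k. P 0 k)" by (simp add: r_def)
  have rS: "r (Suc n) = (SOME k. k \<ge> Suc (r n) \<and> P (Suc n) k)" for n by (simp add: r_def)
  have P0: "P 0 (r 0)" unfolding r0 using assms[where n=0 and N=0] by (metis someI_ex)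
  have PS: "r (Suc n) \<ge> Suc (r n) \<and> P (Suc n) (r (Suc n))" for n
    unfolding rS using assms[where n="Suc n" and N="Suc (r n)"] by (rule someI_ex)
  have "strict_mono r"
    unfolding strict_mono_Suc_iff using PS by (simp add: Suc_le_eq)
  moreover have "P n (r n)" for n
    using P0 PS by (cases n) auto
  ultimately have "strict_mono r" "\<And>n. P n (r n)" by auto
  then show ?thesis using that by blast
qed

lemma local_bound:
  fixes f :: "nat \<Rightarrow> complex ^ 'n \<Rightarrow> complex"
  assumes R: "R > 0" and M: "M > 0" and al: "\<alpha> \<ge> 0"
    and db: "\<And>k. dbound \<alpha> M (f k) (ball p R)"
    and bd: "\<And>k. norm (f k p) \<le> A" and A: "A \<ge> 0"
  obtains \<rho> where "\<rho> > 0" "\<rho> \<le> R" "\<And>k w. w \<in> ball p \<rho> \<Longrightarrow> norm (f k w) < A + 1"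
proof -
  define c where "c = M * (1 + (A+1) powr \<alpha>)"
  have c: "c > 0" using M by (simp add: c_def add_pos_nonneg)
  define \<rho> where "\<rho> = min R (1 / (2 * c))"
  have \<rho>: "\<rho> > 0" "\<rho> \<le> R" using R c by (auto simp: \<rho>_def)
  show ?thesis
  proof (rule that[OF \<rho>])
    fix k w assume w: "w \<in> ball p \<rho>"
    have "norm (w - p) * c < 1"
    proof -
      have "norm (w - p) < 1 / (2 * c)" using w by (simp add: \<rho>_def dist_norm norm_minus_commute)
      then have "norm (w - p) * c < 1 / (2 * c) * c" using c by (intro mult_strict_right_mono) auto
      also have "\<dots> < 1" using c by simp
      finally show ?thesis .
    qed
    then show "norm (f k w) < A + 1"
      using w \<rho> R by (intro propagate[OF convex_ball db M al _ _ bd A]) (auto simp: c_def)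
  qed
qed


lemma local_infty:
  fixes f :: "nat \<Rightarrow> complex ^ 'n \<Rightarrow> complex"
  assumes R: "R > 0" and M: "M > 0" and al: "\<alpha> \<ge> 0"
    and db: "\<And>k. dbound \<alpha> M (f k) (ball p R)"
    and lim: "filterlim (\<lambda>k. norm (f k p)) at_top sequentially"
  obtains \<rho> where "\<rho> > 0" "\<rho> \<le> R" "\<And>B. \<forall>\<^sub>F k in sequentially. \<forall>w\<in>ball p \<rho>. B \<le> norm (f k w)"
proof -
  define c where "c = M * (1 + (1+1) powr \<alpha>)"
  have c: "c > 0" using M by (simp add: c_def add_pos_nonneg)
  define \<rho>0 where "\<rho>0 = min R (1 / (2 * c))"
  have \<rho>0: "\<rho>0 > 0" "\<rho>0 \<le> R" using R c by (auto simp: \<rho>0_def)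
  have big: "1 < norm (f k w)" if w: "w \<in> ball p \<rho>0" and fp: "2 \<le> norm (f k p)" for k w
  proof (rule ccontr)
    assume "\<not> 1 < norm (f k w)"
    then have fw: "norm (f k w) \<le> 1" by simp
    have "norm (p - w) * c < 1"
    proof -
      have "norm (p - w) < 1 / (2 * c)" using w by (simp add: \<rho>0_def dist_norm)
      then have "norm (p - w) * c < 1 / (2 * c) * c" using c by (intro mult_strict_right_mono) auto
      also have "\<dots> < 1" using c by simp
      finally show ?thesis .
    qed
    then have "norm (f k p) < 1 + 1"
      using w \<rho>0 R by (intro propagate[OF convex_ball db M al _ _ fw]) (auto simp: c_def)
    then show False using fp by simp
  qed
  obtain N0 where N0: "\<And>k. k \<ge> N0 \<Longrightarrow> 2 \<le> norm (f k p)"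
    using lim unfolding filterlim_at_top eventually_sequentially by blast
  define \<rho> where "\<rho> = \<rho>0 / 2"
  have \<rho>: "\<rho> > 0" "\<rho> \<le> R" using \<rho>0 by (auto simp: \<rho>_def)
  show ?thesis
  proof (rule that[OF \<rho>], rule ccontr)
    fix B
    assume "\<not> (\<forall>\<^sub>F k in sequentially. \<forall>w\<in>ball p \<rho>. B \<le> norm (f k w))"
    then have fr: "\<forall>N. \<exists>k\<ge>N. \<exists>w\<in>ball p \<rho>. norm (f k w) < B"
      unfolding eventually_sequentially by (auto simp: not_le)
    have "\<exists>k\<ge>N. k \<ge> N0 \<and> (\<exists>w\<in>ball p \<rho>. norm (f k w) < B)" for n N
      using fr[rule_format, of "max N N0"] by auto
    then obtain r :: "nat \<Rightarrow> nat" where r: "strict_mono r" "\<And>n. r n \<ge> N0 \<and> (\<exists>w\<in>ball p \<rho>. norm (f (r n) w) < B)"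
      by (rule subseq_choice[where P="\<lambda>n k. k \<ge> N0 \<and> (\<exists>w\<in>ball p \<rho>. norm (f k w) < B)"]) blast
    then obtain w where w: "\<And>n. w n \<in> ball p \<rho>" "\<And>n. norm (f (r n) (w n)) < B"
      by metis
    define u where "u n = w n - p" for n
    have nu: "norm (u n) < \<rho>" for n using w(1)[of n] by (simp add: u_def dist_norm norm_minus_commute)
    define S where "S = ball (0::complex) 2"
    have inball: "p + l *s u n \<in> ball p \<rho>0" if "l \<in> S" for l n
    proof -
      have "norm (l *s u n) = cmod l * norm (u n)" by (rule norm_smult_vec)
      also have "\<dots> \<le> 2 * norm (u n)" using that by (intro mult_right_mono) (auto simp: S_def)
      also have "\<dots> < \<rho>0" using nu[of n] by (simp add: \<rho>_def)
      finally show ?thesis by (simp add: dist_norm)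
    qed
    define g where "g n l = inverse (f (r n) (p + l *s u n))" for n l
    have fbig: "1 < norm (f (r n) (p + l *s u n))" if "l \<in> S" for n l
      using big[OF inball[OF that]] N0 r(2)[of n] by blast
    have holf: "(\<lambda>l. f (r n) (p + l *s u n)) holomorphic_on S" for n
    proof -
      have "\<exists>f'. ((\<lambda>l. f (r n) (p + l *s u n)) has_field_derivative f') (at l)" if "l \<in> S" for l
      proof -
        have "p + l *s u n \<in> ball p R" using inball[OF that, of n] \<rho>0 unfolding mem_ball by linarith
        then obtain L where "(f (r n) has_derivative L) (at (p + l *s u n))" "clinear_map L"
          using db unfolding dbound_def by blast
        then show ?thesis using line_deriv by blast
      qed
      then show ?thesis by (simp add: holomorphic_on_open S_def)
    qed
    have holg: "g n holomorphic_on S" for n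
      unfolding g_def[abs_def] using fbig
    proof (intro holomorphic_on_inverse[OF holf])
      fix l assume "l \<in> S"
      from fbig[OF this, of n] show "f (r n) (p + l *s u n) \<noteq> 0" by auto
    qed
    have gb: "norm (g n l) \<le> 1" "g n l \<noteq> 0" if "l \<in> S" for n l
      using fbig[OF that, of n] by (auto simp: g_def norm_inverse inverse_le_1_iff)
    define H where "H = {h. h holomorphic_on S \<and> (\<forall>z\<in>S. norm (h z) \<le> 1)}"
    obtain G r2 where G: "G holomorphic_on S" "strict_mono (r2 :: nat \<Rightarrow> nat)"
          "\<And>x. x \<in> S \<Longrightarrow> ((\<lambda>n. g (r2 n) x) \<longlongrightarrow> G x) sequentially"
          "\<And>K. \<lbrakk>compact K; K \<subseteq> S\<rbrakk> \<Longrightarrow> uniform_limit K (g \<circ> r2) G sequentially"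
    proof (rule Montel[of S H g])
      show "open S" by (simp add: S_def)
      show "\<And>h. h \<in> H \<Longrightarrow> h holomorphic_on S" by (simp add: H_def)
      show "\<exists>B. \<forall>h\<in>H. \<forall>z\<in>K. norm (h z) \<le> B" if "compact K" "K \<subseteq> S" for K
        using that by (auto simp: H_def)
      show "range g \<subseteq> H" using holg gb by (auto simp: H_def)
    qed blast
    have S0: "0 \<in> S" by (simp add: S_def)
    have "((\<lambda>n. g (r2 n) 0) \<longlongrightarrow> 0) sequentially"
    proof -
      have "filterlim (\<lambda>n. norm (f ((r \<circ> r2) n) p)) at_top sequentially"
        using filterlim_compose[OF lim filterlim_subseq[OF strict_mono_o[OF r(1) G(2)]]]
        by (simp add: o_def)
      then have "((\<lambda>n. inverse (norm (f ((r \<circ> r2) n) p))) \<longlongrightarrow> 0) sequentially"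
        by (rule tendsto_inverse_0_at_top)
      then have "((\<lambda>n. norm (g (r2 n) 0)) \<longlongrightarrow> 0) sequentially"
        by (simp add: g_def norm_inverse)
      then show ?thesis by (rule tendsto_norm_zero_cancel)
    qed
    then have G0: "G 0 = 0" using G(3)[OF S0] LIMSEQ_unique by blast
    have "G constant_on S"
    proof (rule ccontr)
      assume nc: "\<not> G constant_on S"
      have "G 0 \<noteq> 0"
      proof (rule Hurwitz_no_zeros[of S "g \<circ> r2" G])
        show "open S" "connected S" by (auto simp: S_def)
        show "\<And>n. (g \<circ> r2) n holomorphic_on S" using holg by simp
        show "\<And>n z. z \<in> S \<Longrightarrow> (g \<circ> r2) n z \<noteq> 0" using gb by simp
      qed (use G nc S0 in auto)
      then show False using G0 by simp
    qed
    then have Gz: "G z = 0" if "z \<in> S" for z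
      using that S0 G0 unfolding constant_on_def by metis
    have B1: "B > 1" using fbig[of 1 0] w(2)[of 0] S_def
      by (simp add: u_def)
    have ul: "uniform_limit (cball 0 1) (g \<circ> r2) G sequentially"
      by (rule G(4)) (auto simp: S_def)
    have "\<forall>\<^sub>F n in sequentially. \<forall>x\<in>cball 0 1. dist ((g \<circ> r2) n x) (G x) < 1 / B"
      using ul B1 unfolding uniform_limit_iff by auto
    then obtain n where "\<forall>x\<in>cball 0 1. dist ((g \<circ> r2) n x) (G x) < 1 / B"
      using eventually_sequentially by auto
    then have "dist ((g \<circ> r2) n 1) (G 1) < 1 / B" by simp
    then have "norm (g (r2 n) 1) < 1 / B"
      using Gz[of 1] by (simp add: S_def dist_norm)
    then have "inverse (norm (f (r (r2 n)) (w (r2 n)))) < inverse B"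
      by (simp add: g_def u_def norm_inverse divide_inverse)
    moreover have "norm (f (r (r2 n)) (w (r2 n))) < B" by (rule w(2))
    moreover have "norm (f (r (r2 n)) (w (r2 n))) > 0"
      using fbig[of 1 "r2 n"] by (simp add: S_def u_def) (metis norm_zero not_one_less_zero)
    ultimately show False
      using less_imp_inverse_less less_asym by blast
  qed
qed


lemma unbounded_subseq:
  fixes x :: "nat \<Rightarrow> real"
  assumes "\<not> (\<exists>A. \<forall>k. x k \<le> A)"
  obtains r where "strict_mono r" "filterlim (\<lambda>n. x (r n)) at_top sequentially"
proof -
  have "\<exists>k\<ge>N. real n < x k" for n N
  proof (rule ccontr)
    assume "\<not> (\<exists>k\<ge>N. real n < x k)"
    then have le: "\<And>k. k \<ge> N \<Longrightarrow> x k \<le> real n" by (auto simp: not_less)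
    have "x k \<le> real n + (\<Sum>j<N. \<bar>x j\<bar>)" for k
    proof (cases "k \<ge> N")
      case True then show ?thesis using le[OF True] by (smt (verit) sum_nonneg abs_ge_zero)
    next
      case False
      then have "\<bar>x k\<bar> \<le> (\<Sum>j<N. \<bar>x j\<bar>)"
        by (intro member_le_sum) auto
      then show ?thesis by simp
    qed
    then show False using assms by blast
  qed
  then obtain r where r: "strict_mono r" "\<And>n. real n < x (r n)"
    by (rule subseq_choice[where P="\<lambda>n k. real n < x k"]) blast
  have "filterlim (\<lambda>n. x (r n)) at_top sequentially"
    by (rule filterlim_at_top_mono[OF filterlim_real_sequentially])
       (use r(2) in \<open>auto intro!: always_eventually less_imp_le\<close>)
  with r(1) that show thesis by blast
qed

lemma case_bounded:
  fixes t :: "nat \<Rightarrow> complex ^ 'n \<Rightarrow> complex"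
  assumes D: "open D" "connected D" and zs: "zs \<in> D" and al: "\<alpha> \<ge> 0"
    and loc: "\<And>z. z \<in> D \<Longrightarrow> Rf z > 0 \<and> Mf z > 0 \<and> ball z (Rf z) \<subseteq> D \<and> (\<forall>k. dbound \<alpha> (Mf z) (t k) (ball z (Rf z)))"
    and bd: "\<And>k. norm (t k zs) \<le> A"
  shows "\<exists>r g. strict_mono r \<and> (\<forall>z\<in>D. \<exists>U. open U \<and> z \<in> U \<and> U \<subseteq> D \<and>
                   uniform_limit U (\<lambda>k. t (r k)) g sequentially)"
proof -
  define As where "As = {z\<in>D. \<exists>A. \<forall>k. norm (t k z) \<le> A}"
  have lb: "\<exists>\<rho>>0. ball z \<rho> \<subseteq> D \<and> (\<forall>k. \<forall>w\<in>ball z \<rho>. norm (t k w) \<le> A + 1)"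
    if z: "z \<in> D" and bz: "\<And>k. norm (t k z) \<le> A" for z A
  proof -
    have A0: "A \<ge> 0" using bz[of 0] norm_ge_zero order_trans by blast
    obtain \<rho> where \<rho>: "\<rho> > 0" "\<rho> \<le> Rf z" "\<And>k w. w \<in> ball z \<rho> \<Longrightarrow> norm (t k w) < A + 1"
      using local_bound[of "Rf z" "Mf z" \<alpha> t z A] loc[OF z] al bz A0 by blast
    have "ball z \<rho> \<subseteq> D" using loc[OF z] \<rho>(2) by (meson order_trans subset_ball)
    then show ?thesis using \<rho> by (auto intro!: exI[of _ \<rho>] less_imp_le)
  qed
  have oA: "open As"
  proof (rule openI)
    fix z assume "z \<in> As"
    then obtain A where z: "z \<in> D" "\<And>k. norm (t k z) \<le> A" by (auto simp: As_def)
    obtain \<rho> where "\<rho> > 0" "ball z \<rho> \<subseteq> D" "\<forall>k. \<forall>w\<in>ball z \<rho>. norm (t k w) \<le> A + 1"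
      using lb[OF z] by blast
    then show "\<exists>e>0. ball z e \<subseteq> As"
      by (intro exI[of _ \<rho>]) (auto simp: As_def)
  qed
  have oB: "open (D - As)"
  proof (rule openI)
    fix z assume zz: "z \<in> D - As"
    then have z: "z \<in> D" and nb: "\<not> (\<exists>A. \<forall>k. norm (t k z) \<le> A)" by (auto simp: As_def)
    obtain r where r: "strict_mono r" "filterlim (\<lambda>n. norm (t (r n) z)) at_top sequentially"
      using unbounded_subseq[OF nb] by blast
    obtain \<rho> where \<rho>: "\<rho> > 0" "\<rho> \<le> Rf z" "\<And>B. \<forall>\<^sub>F k in sequentially. \<forall>w\<in>ball z \<rho>. B \<le> norm (t (r k) w)"
      using local_infty[of "Rf z" "Mf z" \<alpha> "\<lambda>k. t (r k)" z] loc[OF z] al r(2) by blast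
    have "ball z \<rho> \<subseteq> D" using loc[OF z] \<rho>(2) by (meson order_trans subset_ball)
    moreover have "w \<notin> As" if w: "w \<in> ball z \<rho>" for w
    proof
      assume "w \<in> As"
      then obtain A where A: "\<And>k. norm (t k w) \<le> A" by (auto simp: As_def)
      obtain k where "\<forall>w\<in>ball z \<rho>. A + 1 \<le> norm (t (r k) w)"
        using \<rho>(3)[of "A+1"] eventually_sequentially by auto
      then have "A + 1 \<le> norm (t (r k) w)" using w by blast
      with A[of "r k"] show False by simp
    qed
    ultimately show "\<exists>e>0. ball z e \<subseteq> D - As"
      using \<rho>(1) by (intro exI[of _ \<rho>]) auto
  qed
  have "zs \<in> As" using zs bd by (auto simp: As_def)
  then have AD: "As = D"
    using connectedD[OF D(2) oA oB] by (auto simp: As_def)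
  have bdK: "\<exists>B. \<forall>n. \<forall>z\<in>K. norm (t n z) \<le> B" if K: "compact K" "K \<subseteq> D" for K
  proof -
    have "\<forall>z\<in>K. \<exists>\<rho> A. \<rho> > 0 \<and> A \<ge> 0 \<and> (\<forall>k. \<forall>w\<in>ball z \<rho>. norm (t k w) \<le> A)"
    proof
      fix z assume "z \<in> K"
      then have z: "z \<in> D" using K by auto
      then obtain A where A: "\<And>k. norm (t k z) \<le> A" using AD by (auto simp: As_def)
      have A0: "A \<ge> 0" using A[of 0] norm_ge_zero order_trans by blast
      from lb[OF z A] A0 show "\<exists>\<rho> A. \<rho> > 0 \<and> A \<ge> 0 \<and> (\<forall>k. \<forall>w\<in>ball z \<rho>. norm (t k w) \<le> A)"
        by (metis add_nonneg_nonneg zero_le_one)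
    qed
    then obtain \<rho> Ab where \<rho>: "\<And>z. z \<in> K \<Longrightarrow> \<rho> z > 0 \<and> Ab z \<ge> 0 \<and> (\<forall>k. \<forall>w\<in>ball z (\<rho> z). norm (t k w) \<le> Ab z)"
      by metis
    obtain C where C: "C \<subseteq> K" "finite C" "K \<subseteq> (\<Union>c\<in>C. ball c (\<rho> c))"
      using compactE_image[OF K(1), of K "\<lambda>c. ball c (\<rho> c)"] \<rho> by force
    show ?thesis
    proof (intro exI allI ballI)
      fix n z assume "z \<in> K"
      then obtain c where c: "c \<in> C" "z \<in> ball c (\<rho> c)" using C by auto
      then have "norm (t n z) \<le> Ab c" using \<rho> C(1) by blast
      also have "\<dots> \<le> (\<Sum>c\<in>C. Ab c)"
        using c C \<rho> by (intro member_le_sum) auto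
      finally show "norm (t n z) \<le> (\<Sum>c\<in>C. Ab c)" .
    qed
  qed
  have equi: "\<exists>d>0. \<forall>n y. y \<in> D \<and> norm (x - y) < d \<longrightarrow> norm (t n x - t n y) < e"
    if x: "x \<in> D" and e: "0 < e" for x e
  proof -
    obtain A where A: "\<And>k. norm (t k x) \<le> A" using AD x by (auto simp: As_def)
    obtain \<rho> where \<rho>: "\<rho> > 0" "ball x \<rho> \<subseteq> D" "\<forall>k. \<forall>w\<in>ball x \<rho>. norm (t k w) \<le> A + 1"
      using lb[OF x A] by blast
    define \<rho>' where "\<rho>' = min \<rho> (Rf x)"
    have \<rho>': "\<rho>' > 0" "\<rho>' \<le> \<rho>" "\<rho>' \<le> Rf x" using \<rho> loc[OF x] by (auto simp: \<rho>'_def)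
    define Lc where "Lc = Mf x * (1 + (A + 1) powr \<alpha>)"
    have Lc: "Lc > 0" using loc[OF x] by (simp add: Lc_def add_pos_nonneg)
    have lip: "norm (t n x - t n y) \<le> Lc * norm (x - y)" if y: "y \<in> ball x \<rho>'" for n y
    proof -
      have "\<forall>w\<in>ball x \<rho>'. \<exists>L. (t n has_derivative L) (at w) \<and> onorm L \<le> Lc"
      proof
        fix w assume w: "w \<in> ball x \<rho>'"
        then have "w \<in> ball x (Rf x)" using \<rho>' by auto
        then obtain L where L: "(t n has_derivative L) (at w)"
          "\<And>v. norm (L v) \<le> Mf x * (1 + norm (t n w) powr \<alpha>) * norm v"
          using loc[OF x] unfolding dbound_def by blast
        have tw: "norm (t n w) \<le> A + 1" using \<rho>(3) w \<rho>' by auto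
        have "norm (t n w) powr \<alpha> \<le> (A + 1) powr \<alpha>"
          using tw al by (intro powr_mono2) auto
        then have "Mf x * (1 + norm (t n w) powr \<alpha>) \<le> Lc"
          using loc[OF x] by (simp add: Lc_def)
        then have "norm (L v) \<le> Lc * norm v" for v
          using L(2)[of v] by (meson mult_right_mono norm_ge_zero order_trans)
        then show "\<exists>L. (t n has_derivative L) (at w) \<and> onorm L \<le> Lc"
          using L(1) onorm_le by blast
      qed
      then obtain Ld where Ld: "\<And>w. w \<in> ball x \<rho>' \<Longrightarrow> (t n has_derivative Ld w) (at w) \<and> onorm (Ld w) \<le> Lc"
        by metis
      show ?thesis
        by (rule differentiable_bound[OF convex_ball, where f="t n" and f'=Ld and B=Lc])
           (use Ld \<rho>' y in \<open>auto intro: has_derivative_at_withinI\<close>)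
    qed
    show ?thesis
    proof (intro exI conjI allI impI)
      show "min \<rho>' (e / Lc) > 0" using \<rho>' e Lc by simp
      fix n y assume y: "y \<in> D \<and> norm (x - y) < min \<rho>' (e / Lc)"
      then have "y \<in> ball x \<rho>'" by (simp add: dist_norm)
      then have "norm (t n x - t n y) \<le> Lc * norm (x - y)" by (rule lip)
      also have "\<dots> < Lc * (e / Lc)" using y Lc by (intro mult_strict_left_mono) auto
      also have "\<dots> = e" using Lc by simp
      finally show "norm (t n x - t n y) < e" .
    qed
  qed
  obtain g r where r: "strict_mono r"
    "\<And>K. \<lbrakk>compact K; K \<subseteq> D\<rbrakk> \<Longrightarrow> uniform_limit K (t \<circ> r) g sequentially"
    using AA_local[OF D(1) bdK equi] by blast
  have "\<forall>z\<in>D. \<exists>U. open U \<and> z \<in> U \<and> U \<subseteq> D \<and> uniform_limit U (\<lambda>k. t (r k)) g sequentially"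
  proof
    fix z assume "z \<in> D"
    then obtain e where e: "e > 0" "cball z e \<subseteq> D" using D(1) open_contains_cball by blast
    have "uniform_limit (cball z e) (t \<circ> r) g sequentially" using r(2) e by auto
    then have "uniform_limit (ball z e) (t \<circ> r) g sequentially"
      by (rule uniform_limit_on_subset) auto
    then have "uniform_limit (ball z e) (\<lambda>k. t (r k)) g sequentially"
      by (simp add: o_def)
    then show "\<exists>U. open U \<and> z \<in> U \<and> U \<subseteq> D \<and> uniform_limit U (\<lambda>k. t (r k)) g sequentially"
      using e by (intro exI[of _ "ball z e"]) auto
  qed
  then show ?thesis using r(1) by blast
qed


lemma case_infty:
  fixes t :: "nat \<Rightarrow> complex ^ 'n \<Rightarrow> complex"
  assumes D: "open D" "connected D" and zs: "zs \<in> D" and al: "\<alpha> \<ge> 0"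
    and loc: "\<And>z. z \<in> D \<Longrightarrow> Rf z > 0 \<and> Mf z > 0 \<and> ball z (Rf z) \<subseteq> D \<and> (\<forall>k. dbound \<alpha> (Mf z) (t k) (ball z (Rf z)))"
    and lim: "filterlim (\<lambda>k. norm (t k zs)) at_top sequentially"
  shows "\<forall>z\<in>D. \<exists>U. open U \<and> z \<in> U \<and> U \<subseteq> D \<and>
                   (\<forall>B. \<forall>\<^sub>F k in sequentially. \<forall>w\<in>U. cmod (t k w) \<ge> B)"
proof -
  define Bs where "Bs = {z\<in>D. filterlim (\<lambda>k. norm (t k z)) at_top sequentially}"
  have li: "\<exists>\<rho>>0. ball z \<rho> \<subseteq> D \<and> (\<forall>B. \<forall>\<^sub>F k in sequentially. \<forall>w\<in>ball z \<rho>. B \<le> norm (t k w))"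
    if z: "z \<in> Bs" for z
  proof -
    have zD: "z \<in> D" and l: "filterlim (\<lambda>k. norm (t k z)) at_top sequentially"
      using z by (auto simp: Bs_def)
    obtain \<rho> where \<rho>: "\<rho> > 0" "\<rho> \<le> Rf z" "\<And>B. \<forall>\<^sub>F k in sequentially. \<forall>w\<in>ball z \<rho>. B \<le> norm (t k w)"
      using local_infty[of "Rf z" "Mf z" \<alpha> t z] loc[OF zD] al l by blast
    have "ball z \<rho> \<subseteq> D" using loc[OF zD] \<rho>(2) by (meson order_trans subset_ball)
    then show ?thesis using \<rho> by blast
  qed
  have oA: "open Bs"
  proof (rule openI)
    fix z assume z: "z \<in> Bs"
    obtain \<rho> where \<rho>: "\<rho>>0" "ball z \<rho> \<subseteq> D" "\<And>B. \<forall>\<^sub>F k in sequentially. \<forall>w\<in>ball z \<rho>. B \<le> norm (t k w)"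
      using li[OF z] by blast
    have "w \<in> Bs" if w: "w \<in> ball z \<rho>" for w
    proof -
      have "filterlim (\<lambda>k. norm (t k w)) at_top sequentially"
        unfolding filterlim_at_top
      proof
        fix B
        show "\<forall>\<^sub>F k in sequentially. B \<le> norm (t k w)"
          using \<rho>(3)[of B] w by (auto elim: eventually_mono)
      qed
      then show ?thesis using w \<rho>(2) by (auto simp: Bs_def)
    qed
    then show "\<exists>e>0. ball z e \<subseteq> Bs" using \<rho>(1) by blast
  qed
  have oB: "open (D - Bs)"
  proof (rule openI)
    fix z assume zz: "z \<in> D - Bs"
    then have z: "z \<in> D" and nl: "\<not> filterlim (\<lambda>k. norm (t k z)) at_top sequentially"
      by (auto simp: Bs_def)
    then obtain Z where "\<not> (\<forall>\<^sub>F k in sequentially. Z \<le> norm (t k z))"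
      unfolding filterlim_at_top by blast
    then have "\<forall>N. \<exists>k\<ge>N. norm (t k z) < Z"
      unfolding eventually_sequentially by (auto simp: not_le)
    then have "\<exists>k\<ge>N. norm (t k z) \<le> Z" for n N
      by (meson less_imp_le)
    then obtain r :: "nat \<Rightarrow> nat" where r: "strict_mono r" "\<And>n. norm (t (r n) z) \<le> Z"
      by (rule subseq_choice[where P="\<lambda>n k. norm (t k z) \<le> Z"]) blast
    have Z0: "Z \<ge> 0" using r(2)[of 0] norm_ge_zero order_trans by blast
    obtain \<rho> where \<rho>: "\<rho> > 0" "\<rho> \<le> Rf z" "\<And>k w. w \<in> ball z \<rho> \<Longrightarrow> norm (t (r k) w) < Z + 1"
      using local_bound[of "Rf z" "Mf z" \<alpha> "\<lambda>k. t (r k)" z Z] loc[OF z] al r(2) Z0 by blast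
    have "ball z \<rho> \<subseteq> D" using loc[OF z] \<rho>(2) by (meson order_trans subset_ball)
    moreover have "w \<notin> Bs" if w: "w \<in> ball z \<rho>" for w
    proof
      assume "w \<in> Bs"
      then have "filterlim (\<lambda>k. norm (t k w)) at_top sequentially" by (auto simp: Bs_def)
      then have "filterlim (\<lambda>k. norm (t (r k) w)) at_top sequentially"
        by (rule filterlim_compose[OF _ filterlim_subseq[OF r(1)]])
      then have "\<forall>\<^sub>F k in sequentially. Z + 1 \<le> norm (t (r k) w)"
        unfolding filterlim_at_top by blast
      then obtain k where "Z + 1 \<le> norm (t (r k) w)" using eventually_sequentially by auto
      with \<rho>(3)[OF w, of k] show False by simp
    qed
    ultimately show "\<exists>e>0. ball z e \<subseteq> D - Bs"
      using \<rho>(1) by (intro exI[of _ \<rho>]) auto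
  qed
  have "zs \<in> Bs" using zs lim by (auto simp: Bs_def)
  then have BD: "Bs = D"
    using connectedD[OF D(2) oA oB] by (auto simp: Bs_def)
  show ?thesis
  proof
    fix z assume "z \<in> D"
    then obtain \<rho> where "\<rho>>0" "ball z \<rho> \<subseteq> D" "\<And>B. \<forall>\<^sub>F k in sequentially. \<forall>w\<in>ball z \<rho>. B \<le> norm (t k w)"
      using li BD by blast
    then show "\<exists>U. open U \<and> z \<in> U \<and> U \<subseteq> D \<and> (\<forall>B. \<forall>\<^sub>F k in sequentially. \<forall>w\<in>U. cmod (t k w) \<ge> B)"
      by (intro exI[of _ "ball z \<rho>"]) auto
  qed
qed

theorem theorem11:
  fixes D :: "(complex ^ 'n) set" and \<F> :: "(complex ^ 'n \<Rightarrow> complex) set" and \<alpha> :: real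
  assumes "open D" and "connected D" and "D \<noteq> {}"
    and "\<forall>f\<in>\<F>. holo_on f D"
    and "\<alpha> > 0"
    and "loc_unif_bounded ((\<lambda>f. F_alpha \<alpha> f) ` \<F>) D"
  shows "normal_family \<F> D"
proof -
  note D = assms(1,2)
  have al: "\<alpha> \<ge> 0" using assms(5) by simp
  have "\<forall>z\<in>D. \<exists>R M. R > 0 \<and> M > 0 \<and> ball z R \<subseteq> D \<and> (\<forall>f\<in>\<F>. dbound \<alpha> M f (ball z R))"
  proof
    fix z assume z: "z \<in> D"
    obtain U M0 where U0: "open U" "z \<in> U" "U \<subseteq> D" "\<forall>g\<in>(\<lambda>f. F_alpha \<alpha> f) ` \<F>. \<forall>w\<in>U. \<bar>g w\<bar> \<le> M0"
      using assms(6) z unfolding loc_unif_bounded_def by meson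
    have U4: "\<bar>F_alpha \<alpha> f w\<bar> \<le> M0" if "f \<in> \<F>" "w \<in> U" for f w
      using U0(4) that by simp
    note U = U0(1-3) U4
    obtain R where R: "R > 0" "ball z R \<subseteq> U" using U(1,2) openE by blast
    define M where "M = max M0 1"
    have "dbound \<alpha> M f (ball z R)" if f: "f \<in> \<F>" for f
      unfolding dbound_def
    proof
      fix w assume w: "w \<in> ball z R"
      then have wD: "w \<in> D" using R U by blast
      then obtain L where L: "clinear_map L" "(f has_derivative L) (at w)"
        using assms(4) f unfolding holo_on_def by blast
      have "w \<in> U" using w R by blast
      then have "\<bar>F_alpha \<alpha> f w\<bar> \<le> M0" using U(4)[OF f] by blast
      then have FM: "\<bar>F_alpha \<alpha> f w\<bar> \<le> M" by (simp add: M_def)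
      show "\<exists>L. (f has_derivative L) (at w) \<and> clinear_map L \<and>
          (\<forall>v. cmod (L v) \<le> M * (1 + cmod (f w) powr \<alpha>) * norm v)"
        using L(1,2) deriv_bound_from_F[OF L(2) L(1) FM] by blast
    qed
    then show "\<exists>R M. R > 0 \<and> M > 0 \<and> ball z R \<subseteq> D \<and> (\<forall>f\<in>\<F>. dbound \<alpha> M f (ball z R))"
      using R U by (intro exI[of _ R] exI[of _ M]) (auto simp: M_def)
  qed
  then have "\<forall>z. \<exists>R. \<exists>M. z \<in> D \<longrightarrow> R > 0 \<and> M > 0 \<and> ball z R \<subseteq> D \<and> (\<forall>f\<in>\<F>. dbound \<alpha> M f (ball z R))"
    by blast
  from choice[OF this] obtain Rf where "\<forall>z. \<exists>M. z \<in> D \<longrightarrow> Rf z > 0 \<and> M > 0 \<and> ball z (Rf z) \<subseteq> D \<and> (\<forall>f\<in>\<F>. dbound \<alpha> M f (ball z (Rf z)))"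
    by blast
  from choice[OF this] obtain Mf where RM0: "\<forall>z. z \<in> D \<longrightarrow> Rf z > 0 \<and> Mf z > 0 \<and> ball z (Rf z) \<subseteq> D \<and> (\<forall>f\<in>\<F>. dbound \<alpha> (Mf z) f (ball z (Rf z)))"
    by blast
  note RM = RM0[rule_format]
  obtain zs where zs: "zs \<in> D" using assms(3) by blast
  show ?thesis
    unfolding normal_family_def
  proof (intro allI impI)
    fix s :: "nat \<Rightarrow> complex ^ 'n \<Rightarrow> complex"
    assume sF: "range s \<subseteq> \<F>"
    then have sk: "\<And>k. s k \<in> \<F>" by auto
    show "\<exists>r. strict_mono r \<and>
          ((\<exists>g. \<forall>z\<in>D. \<exists>U. open U \<and> z \<in> U \<and> U \<subseteq> D \<and> uniform_limit U (\<lambda>k. s (r k)) g sequentially)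
           \<or> (\<forall>z\<in>D. \<exists>U. open U \<and> z \<in> U \<and> U \<subseteq> D \<and> (\<forall>B. \<forall>\<^sub>F k in sequentially. \<forall>w\<in>U. cmod (s (r k) w) \<ge> B)))"
    proof (cases "\<exists>A. \<forall>N. \<exists>k\<ge>N. norm (s k zs) \<le> A")
      case True
      then obtain A where "\<And>N. \<exists>k\<ge>N. norm (s k zs) \<le> A" by blast
      then obtain r1 :: "nat \<Rightarrow> nat" where r1: "strict_mono r1" "\<And>n. norm (s (r1 n) zs) \<le> A"
        by (rule subseq_choice[where P="\<lambda>n k. norm (s k zs) \<le> A"]) blast
      have loc: "\<And>z. z \<in> D \<Longrightarrow> Rf z > 0 \<and> Mf z > 0 \<and> ball z (Rf z) \<subseteq> D \<and> (\<forall>k. dbound \<alpha> (Mf z) (s (r1 k)) (ball z (Rf z)))"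
        using RM sk by blast
      obtain r2 g where r2: "strict_mono r2" "\<forall>z\<in>D. \<exists>U. open U \<and> z \<in> U \<and> U \<subseteq> D \<and>
                   uniform_limit U (\<lambda>k. s (r1 (r2 k))) g sequentially"
        using case_bounded[OF D zs al loc r1(2)] by blast
      have sm: "strict_mono (r1 \<circ> r2)" using strict_mono_o[OF r1(1) r2(1)] .
      have ul: "\<forall>z\<in>D. \<exists>U. open U \<and> z \<in> U \<and> U \<subseteq> D \<and> uniform_limit U (\<lambda>k. s ((r1 \<circ> r2) k)) g sequentially"
        using r2(2) by (simp add: o_def)
      show ?thesis
        apply (rule exI[of _ "r1 \<circ> r2"])
        apply (rule conjI[OF sm])
        apply (rule disjI1)
        apply (rule exI[of _ g])
        by (rule ul)
    next
      case False
      have "\<forall>A. \<exists>N. \<forall>k\<ge>N. A < norm (s k zs)"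
      proof
        fix A
        from False have "\<not> (\<forall>N. \<exists>k\<ge>N. norm (s k zs) \<le> A)" by blast
        then obtain N where "\<forall>k\<ge>N. \<not> norm (s k zs) \<le> A" by blast
        then show "\<exists>N. \<forall>k\<ge>N. A < norm (s k zs)" by (auto simp: not_le)
      qed
      then have "filterlim (\<lambda>k. norm (s k zs)) at_top sequentially"
        unfolding filterlim_at_top eventually_sequentially by (meson less_imp_le)
      moreover have loc: "\<And>z. z \<in> D \<Longrightarrow> Rf z > 0 \<and> Mf z > 0 \<and> ball z (Rf z) \<subseteq> D \<and> (\<forall>k. dbound \<alpha> (Mf z) (s k) (ball z (Rf z)))"
        using RM sk by blast
      ultimately have inf: "\<forall>z\<in>D. \<exists>U. open U \<and> z \<in> U \<and> U \<subseteq> D \<and>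
                   (\<forall>B. \<forall>\<^sub>F k in sequentially. \<forall>w\<in>U. cmod (s k w) \<ge> B)"
        by (rule case_infty[OF D zs al, rotated])
      have sm: "strict_mono (id :: nat \<Rightarrow> nat)" by (simp add: strict_mono_def)
      show ?thesis
        apply (rule exI[of _ id])
        apply (rule conjI[OF sm])
        apply (rule disjI2)
        using inf by simp
    qed
  qed
qed

end
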